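(* Let $R$ be a commutative ring, $S$ a subring of $R$, $I$ an ideal of $S$, $n\ge1$, and $f\in R[x]$. The following are equivalent: (1) $f\in \mathrm{Int}_R(T_n(S),T_n(I))$; (2) for all $1\le i\le j\le n$, $\langle f,p_{ij}\rangle\in \mathrm{Int}(S^{\ast},I)$; (3) for every $0\le k\le n-1$ there exists $i\in\mathbb{N}$ with $\langle f,p_{i,\,i+k}\rangle\in\mathrm{Int}(S^{\ast},I)$.
   Context: $\mathbb{N}=\{1,2,3,\dots\}$. For a ring $A$, $T_n(A)$ denotes the ring of upper triangular $n\times n$ matrices with entries in $A$. For $g\in R[x]$ and a square matrix $C$ over $R$, $g(C)$ is the usual evaluation. $\mathrm{Int}_R(T_m(S),T_m(I))=\{g\in R[x]\mid \forall C\in T_m(S):\ g(C)\in T_m(I)\}$. Let $R[X]=R[\{x_{ab}\mid a,b\in\mathbb{N}\}]$ be the polynomial ring in independent commuting variables $x_{ab}$. Path polynomials: for $1\le i\le j$ and $k>0$, $p_{ij}^{(k)}=\sum_{i=i_1\le i_2\le\dots\le i_{k+1}=j} x_{i_1i_2}x_{i_2i_3}\cdots x_{i_ki_{k+1}}$; for $1\le i\le j$, $p_{ij}^{(0)}=\delta_{ij}$; for $i>j$, $p_{ij}^{(k)}=0$ for all $k$. Write $p_{ij}=(p_{ij}^{(k)})_{k\ge0}$. For $f=\sum_k f_kx^k\in R[x]$ set $\langle f,p_{ij}\rangle=\sum_{k\ge0} f_k\,p_{ij}^{(k)}\in R[X]$. $\mathrm{Int}(S^{\ast},I)$ denotes the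 set of polynomials in $R[X]$ that take values in $I$ whenever elements of $S$ are substituted (independently) for all the variables. *)

theory Defs
  imports "HOL-Computational_Algebra.Polynomial" "HOL-Library.FuncSet"
begin

definition is_subring :: "'a::comm_ring_1 set \<Rightarrow> bool" where
  "is_subring S \<longleftrightarrow> 0 \<in> S \<and> 1 \<in> S \<and> (\<forall>x\<in>S. \<forall>y\<in>S. x + y \<in> S \<and> x * y \<in> S \<and> - x \<in> S)"

definition is_ideal_of :: "'a::comm_ring_1 set \<Rightarrow> 'a set \<Rightarrow> bool" where
  "is_ideal_of I S \<longleftrightarrow> I \<subseteq> S \<and> 0 \<in> I \<and>
     (\<forall>x\<in>I. \<forall>y\<in>I. x + y \<in> I \<and> - x \<in> I) \<and> (\<forall>s\<in>S. \<forall>x\<in>I. s * x \<in> I)"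

text \<open>n x n matrices are functions nat => nat => 'a, indices 1..n, entries outside zero.\<close>
definition tri_mats :: "nat \<Rightarrow> 'a::comm_ring_1 set \<Rightarrow> (nat \<Rightarrow> nat \<Rightarrow> 'a) set" where
  "tri_mats n A = {M. \<forall>i j. (1 \<le> i \<and> i \<le> j \<and> j \<le> n \<longrightarrow> M i j \<in> A) \<and>
                           (\<not> (1 \<le> i \<and> i \<le> j \<and> j \<le> n) \<longrightarrow> M i j = 0)}"

definition mat_one :: "nat \<Rightarrow> nat \<Rightarrow> nat \<Rightarrow> 'a::comm_ring_1" where
  "mat_one n i j = (if i = j \<and> 1 \<le> i \<and> i \<le> n then 1 else 0)"

definition mat_mult :: "nat \<Rightarrow> (nat \<Rightarrow> nat \<Rightarrow> 'a::comm_ring_1) \<Rightarrow> (nat \<Rightarrow> nat \<Rightarrow> 'a) \<Rightarrow> nat \<Rightarrow> nat \<Rightarrow> 'a" where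
  "mat_mult n A B i j = (\<Sum>l\<in>{1..n}. A i l * B l j)"

fun mat_pow :: "nat \<Rightarrow> (nat \<Rightarrow> nat \<Rightarrow> 'a::comm_ring_1) \<Rightarrow> nat \<Rightarrow> nat \<Rightarrow> nat \<Rightarrow> 'a" where
  "mat_pow n C 0 = mat_one n"
| "mat_pow n C (Suc k) = mat_mult n (mat_pow n C k) C"

definition poly_mat_eval :: "nat \<Rightarrow> 'a::comm_ring_1 poly \<Rightarrow> (nat \<Rightarrow> nat \<Rightarrow> 'a) \<Rightarrow> nat \<Rightarrow> nat \<Rightarrow> 'a" where
  "poly_mat_eval n g C i j = (\<Sum>k\<le>degree g. coeff g k * mat_pow n C k i j)"

definition Int_T :: "nat \<Rightarrow> 'a::comm_ring_1 set \<Rightarrow> 'a set \<Rightarrow> 'a poly set" where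
  "Int_T n S I = {g. \<forall>C \<in> tri_mats n S. poly_mat_eval n g C \<in> tri_mats n I}"

text \<open>Value of the path polynomial p_ij^(k) under the substitution x_ab := c a b.\<close>
definition path_poly_eval :: "(nat \<Rightarrow> nat \<Rightarrow> 'a::comm_ring_1) \<Rightarrow> nat \<Rightarrow> nat \<Rightarrow> nat \<Rightarrow> 'a" where
  "path_poly_eval c i j k =
     (if 1 \<le> i \<and> i \<le> j then
        (if k = 0 then (if i = j then 1 else 0)
         else (\<Sum>s\<in>{s. s \<in> {1..k+1} \<rightarrow>\<^sub>E {i..j} \<and> s 1 = i \<and> s (k+1) = j \<and>
                        (\<forall>t\<in>{1..k}. s t \<le> s (Suc t))}.
                 \<Prod>t\<in>{1..k}. c (s t) (s (Suc t))))
      else 0)"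

text \<open>Value of <f, p_ij> under the substitution x_ab := c a b.\<close>
definition pair_eval :: "'a::comm_ring_1 poly \<Rightarrow> (nat \<Rightarrow> nat \<Rightarrow> 'a) \<Rightarrow> nat \<Rightarrow> nat \<Rightarrow> 'a" where
  "pair_eval f c i j = (\<Sum>k\<le>degree f. coeff f k * path_poly_eval c i j k)"

text \<open><f, p_ij> \<in> Int(S*, I): all substitutions of elements of S for the variables give values in I.\<close>
definition pair_in_Int :: "'a::comm_ring_1 poly \<Rightarrow> 'a set \<Rightarrow> 'a set \<Rightarrow> nat \<Rightarrow> nat \<Rightarrow> bool" where
  "pair_in_Int f S I i j \<longleftrightarrow> (\<forall>c. (\<forall>a b. c a b \<in> S) \<longrightarrow> pair_eval f c i j \<in> I)"

end

theory Submission
  imports Defs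
begin

definition Aset :: "nat \<Rightarrow> nat \<Rightarrow> nat \<Rightarrow> (nat \<Rightarrow> nat) set" where
  "Aset k i j = {s. s \<in> {1..k+1} \<rightarrow>\<^sub>E {i..j} \<and> s 1 = i \<and> s (k+1) = j \<and>
                        (\<forall>t\<in>{1..k}. s t \<le> s (Suc t))}"

definition Q :: "(nat \<Rightarrow> nat \<Rightarrow> 'a::comm_ring_1) \<Rightarrow> nat \<Rightarrow> nat \<Rightarrow> nat \<Rightarrow> 'a" where
  "Q c k i j = (\<Sum>s\<in>Aset k i j. \<Prod>t\<in>{1..k}. c (s t) (s (Suc t)))"

lemma finite_Aset: "finite (Aset k i j)"
proof -
  have "Aset k i j \<subseteq> {1..k+1} \<rightarrow>\<^sub>E {i..j}" unfolding Aset_def by auto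
  thus ?thesis by (rule finite_subset) (simp add: finite_PiE)
qed

lemma mono_chain:
  assumes "\<forall>t\<in>{1..k}. s t \<le> s (Suc t)" "1 \<le> a" "a \<le> b" "b \<le> k+1"
  shows "(s a :: nat) \<le> s b"
  using assms(3,4)
proof (induction b rule: dec_induct)
  case base then show ?case by simp
next
  case (step m)
  then have "s m \<le> s (Suc m)" using assms(1,2) by auto
  with step show ?case by simp
qed

lemma Q_zero: "Q c 0 i j = (if i = j then 1 else 0)"
proof (cases "i = j")
  case True
  have "Aset 0 i j = {restrict (\<lambda>_. i) {1}}"
  proof
    show "Aset 0 i j \<subseteq> {restrict (\<lambda>_. i) {1}}"
    proof
      fix s assume "s \<in> Aset 0 i j"
      then have "s \<in> {1} \<rightarrow>\<^sub>E {i..j}" "s 1 = i" unfolding Aset_def by auto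
      then have "s = restrict (\<lambda>_. i) {1}" by (auto simp: fun_eq_iff PiE_def extensional_def)
      thus "s \<in> {restrict (\<lambda>_. i) {1}}" by simp
    qed
    show "{restrict (\<lambda>_. i) {1}} \<subseteq> Aset 0 i j" using True unfolding Aset_def by auto
  qed
  then show ?thesis using True unfolding Q_def by simp
next
  case False
  have "Aset 0 i j = {}" using False unfolding Aset_def by auto
  then show ?thesis using False unfolding Q_def by simp
qed

lemma path_Q: "1 \<le> i \<Longrightarrow> i \<le> j \<Longrightarrow> path_poly_eval c i j k = Q c k i j"
  unfolding path_poly_eval_def by (simp add: Q_zero) (simp add: Q_def Aset_def)

lemma Q_Suc:
  assumes "i \<le> j"
  shows "Q c (Suc k) i j = (\<Sum>l\<in>{i..j}. Q c k i l * c l j)"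
proof -
  let ?g = "\<lambda>s. \<Prod>t\<in>{1..Suc k}. c (s t) (s (Suc t))"
  define h2 where "h2 = (\<lambda>l s. (\<Prod>t\<in>{1..k}. c (s t) (s (Suc t))) * c l j)"
  let ?h = "case_prod h2"
  have "(\<Sum>l\<in>{i..j}. Q c k i l * c l j) = (\<Sum>l\<in>{i..j}. \<Sum>s\<in>Aset k i l. h2 l s)"
    unfolding Q_def h2_def by (simp add: sum_distrib_right)
  also have "\<dots> = (\<Sum>p\<in>Sigma {i..j} (\<lambda>l. Aset k i l). ?h p)"
    by (rule sum.Sigma) (auto simp: finite_Aset)
  also have "\<dots> = sum ?g (Aset (Suc k) i j)"
  proof (rule sum.reindex_bij_witness[symmetric, where j = "\<lambda>s. (s (k+1), restrict s {1..k+1})"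
        and i = "\<lambda>(l, s). s(k+2 := j)"])
    fix s assume s: "s \<in> Aset (Suc k) i j"
    then have sP: "s \<in> {1..k+2} \<rightarrow>\<^sub>E {i..j}" "s 1 = i" "s (k+2) = j"
      "\<forall>t\<in>{1..Suc k}. s t \<le> s (Suc t)" unfolding Aset_def by auto
    show "(case (s (k+1), restrict s {1..k+1}) of (l, s) \<Rightarrow> s(k+2 := j)) = s"
      using sP(1,3) by (auto simp: fun_eq_iff PiE_def extensional_def)
    have mk: "\<forall>t\<in>{1..k}. s t \<le> s (Suc t)" using sP(4) by auto
    have "s t \<le> s (k+1)" if "t \<in> {1..k+1}" for t
      using mono_chain[OF sP(4), of t "k+1"] that by auto
    moreover have "s t \<ge> i" if "t \<in> {1..k+1}" for t using sP(1) that by (auto simp: PiE_def Pi_def)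
    moreover have "s (k+1) \<le> j" "s (k+1) \<ge> i" using sP(1) by (auto simp: PiE_def Pi_def)
    ultimately show "(s (k+1), restrict s {1..k+1}) \<in> Sigma {i..j} (\<lambda>l. Aset k i l)"
      using sP(2) mk unfolding Aset_def by auto
    show "?h (s (k+1), restrict s {1..k+1}) = ?g s"
      using sP(3) by (simp add: prod.nat_ivl_Suc' h2_def)
  next
    fix p assume p: "p \<in> Sigma {i..j} (\<lambda>l. Aset k i l)"
    obtain l s where ps: "p = (l, s)" by (cases p)
    with p have l: "i \<le> l" "l \<le> j" and sP: "s \<in> {1..k+1} \<rightarrow>\<^sub>E {i..l}" "s 1 = i" "s (k+1) = l"
      "\<forall>t\<in>{1..k}. s t \<le> s (Suc t)" unfolding Aset_def by auto
    show "(((\<lambda>(l, s). s(k+2 := j)) p) (k+1), restrict ((\<lambda>(l, s). s(k+2 := j)) p) {1..k+1}) = p"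
      using ps sP by (auto simp: fun_eq_iff PiE_def extensional_def)
    show "(\<lambda>(l, s). s(k+2 := j)) p \<in> Aset (Suc k) i j"
      using ps sP l unfolding Aset_def
      by (auto simp: PiE_def Pi_def extensional_def le_Suc_eq)
  qed
  finally show ?thesis unfolding Q_def by simp
qed

lemma mat_pow_zero:
  assumes C: "C \<in> tri_mats n X" and nt: "\<not> (1 \<le> a \<and> a \<le> b \<and> b \<le> n)"
  shows "mat_pow n C k a b = 0"
  using nt
proof (induction k arbitrary: a b)
  case 0 then show ?case by (auto simp: mat_one_def)
next
  case (Suc k)
  have Cz: "C l b = 0" if "\<not> (1 \<le> l \<and> l \<le> b \<and> b \<le> n)" for l
    using C that unfolding tri_mats_def by blast
  have "mat_pow n C k a l * C l b = 0" if "l \<in> {1..n}" for l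
  proof (cases "1 \<le> a \<and> a \<le> l \<and> l \<le> n")
    case True
    then have "\<not> (1 \<le> l \<and> l \<le> b \<and> b \<le> n)" using Suc.prems by auto
    then show ?thesis using Cz by simp
  next
    case False then show ?thesis using Suc.IH by simp
  qed
  then show ?case by (simp add: mat_mult_def)
qed

lemma mat_pow_Q:
  assumes C: "C \<in> tri_mats n X" and "1 \<le> i" "i \<le> j" "j \<le> n"
  shows "mat_pow n C k i j = Q C k i j"
  using assms(3,4)
proof (induction k arbitrary: j)
  case 0 then show ?case using assms(2) by (simp add: mat_one_def Q_zero)
next
  case (Suc k)
  have Cz: "C l j = 0" if "\<not> (1 \<le> l \<and> l \<le> j \<and> j \<le> n)" for l
    using C that unfolding tri_mats_def by blast
  have "mat_pow n C (Suc k) i j = (\<Sum>l\<in>{1..n}. mat_pow n C k i l * C l j)"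
    by (simp add: mat_mult_def)
  also have "\<dots> = (\<Sum>l\<in>{i..j}. mat_pow n C k i l * C l j)"
  proof (rule sum.mono_neutral_right)
    show "{i..j} \<subseteq> {1..n}" using assms(2) Suc.prems by auto
    show "\<forall>l\<in>{1..n} - {i..j}. mat_pow n C k i l * C l j = 0"
    proof
      fix l assume l: "l \<in> {1..n} - {i..j}"
      show "mat_pow n C k i l * C l j = 0"
      proof (cases "l < i")
        case True then show ?thesis using mat_pow_zero[OF C, of i l k] by simp
      next
        case False then show ?thesis using l Cz by auto
      qed
    qed
  qed simp
  also have "\<dots> = (\<Sum>l\<in>{i..j}. Q C k i l * C l j)"
    using Suc.IH Suc.prems by (intro sum.cong) auto
  also have "\<dots> = Q C (Suc k) i j" by (simp only: Q_Suc[OF Suc.prems(1)])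
  finally show ?case .
qed

lemma Q_cong:
  assumes "\<And>a b. i \<le> a \<Longrightarrow> a \<le> b \<Longrightarrow> b \<le> j \<Longrightarrow> c a b = c' a b"
  shows "Q c k i j = Q c' k i j"
  unfolding Q_def
proof (intro sum.cong refl prod.cong)
  fix s t assume s: "s \<in> Aset k i j" and t: "t \<in> {1..k}"
  then have "s \<in> {1..k+1} \<rightarrow>\<^sub>E {i..j}" "s t \<le> s (Suc t)" unfolding Aset_def by auto
  then have "i \<le> s t" "s (Suc t) \<le> j" "s t \<le> s (Suc t)" using t by (auto simp: PiE_def Pi_def)
  then show "c (s t) (s (Suc t)) = c' (s t) (s (Suc t))" using assms by blast
qed

lemma Q_shift: "Q c k (i+d) (j+d) = Q (\<lambda>a b. c (a+d) (b+d)) k i j"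
  unfolding Q_def
proof (rule sum.reindex_bij_witness[where j = "\<lambda>s. restrict (\<lambda>t. s t - d) {1..k+1}"
      and i = "\<lambda>s. restrict (\<lambda>t. s t + d) {1..k+1}"])
  fix s assume s: "s \<in> Aset k (i+d) (j+d)"
  then have sP: "s \<in> {1..k+1} \<rightarrow>\<^sub>E {i+d..j+d}" "s 1 = i+d" "s (k+1) = j+d"
      "\<forall>t\<in>{1..k}. s t \<le> s (Suc t)" unfolding Aset_def by auto
  show "restrict (\<lambda>t. restrict (\<lambda>t. s t - d) {1..k+1} t + d) {1..k+1} = s"
    using sP(1) by (auto simp: fun_eq_iff PiE_def Pi_def extensional_def)
  show "restrict (\<lambda>t. s t - d) {1..k+1} \<in> Aset k i j"
    using sP unfolding Aset_def by (auto simp: PiE_def Pi_def extensional_def)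
  show "(\<Prod>t\<in>{1..k}. c (restrict (\<lambda>t. s t - d) {1..k+1} t + d) (restrict (\<lambda>t. s t - d) {1..k+1} (Suc t) + d))
        = (\<Prod>t\<in>{1..k}. c (s t) (s (Suc t)))"
  proof (rule prod.cong[OF refl])
    fix t assume t: "t \<in> {1..k}"
    then have "d \<le> s t" "d \<le> s (Suc t)" using sP(1) by (auto simp: PiE_def Pi_def dest!: bspec[of _ _ t] bspec[of _ _ "Suc t"])
    then show "c (restrict (\<lambda>t. s t - d) {1..k+1} t + d) (restrict (\<lambda>t. s t - d) {1..k+1} (Suc t) + d)
        = c (s t) (s (Suc t))" using t by simp
  qed
next
  fix s assume s: "s \<in> Aset k i j"
  then have sP: "s \<in> {1..k+1} \<rightarrow>\<^sub>E {i..j}" "s 1 = i" "s (k+1) = j"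
      "\<forall>t\<in>{1..k}. s t \<le> s (Suc t)" unfolding Aset_def by auto
  show "restrict (\<lambda>t. restrict (\<lambda>t. s t + d) {1..k+1} t - d) {1..k+1} = s"
    using sP(1) by (auto simp: fun_eq_iff PiE_def Pi_def extensional_def)
  show "restrict (\<lambda>t. s t + d) {1..k+1} \<in> Aset k (i+d) (j+d)"
    using sP unfolding Aset_def by (auto simp: PiE_def Pi_def extensional_def)
qed

lemma pme_pair:
  assumes C: "C \<in> tri_mats n X" and "1 \<le> i" "i \<le> j" "j \<le> n"
  shows "poly_mat_eval n f C i j = pair_eval f C i j"
  unfolding poly_mat_eval_def pair_eval_def
  by (simp add: mat_pow_Q[OF assms] path_Q[OF assms(2,3)])

lemma pair_eval_cong:
  assumes "\<And>a b. i \<le> a \<Longrightarrow> a \<le> b \<Longrightarrow> b \<le> j \<Longrightarrow> c a b = c' a b" "1 \<le> i" "i \<le> j"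
  shows "pair_eval f c i j = pair_eval f c' i j"
proof -
  have "\<And>k. Q c k i j = Q c' k i j" by (rule Q_cong) (rule assms(1))
  then show ?thesis unfolding pair_eval_def by (simp add: path_Q[OF assms(2,3)])
qed

lemma pair_eval_shift:
  assumes "1 \<le> i" "i \<le> j"
  shows "pair_eval f c (i+d) (j+d) = pair_eval f (\<lambda>a b. c (a+d) (b+d)) i j"
proof -
  have "1 \<le> i + d" "i + d \<le> j + d" using assms by auto
  then show ?thesis unfolding pair_eval_def by (simp add: path_Q[OF assms] path_Q Q_shift)
qed

lemma pin_up:
  assumes "pair_in_Int f S I i j" "1 \<le> i" "i \<le> j"
  shows "pair_in_Int f S I (i+d) (j+d)"
  unfolding pair_in_Int_def
proof (intro allI impI)
  fix c :: "nat \<Rightarrow> nat \<Rightarrow> _" assume "\<forall>a b. c a b \<in> S"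
  then have "\<forall>a b. c (a+d) (b+d) \<in> S" by auto
  then show "pair_eval f c (i+d) (j+d) \<in> I"
    unfolding pair_eval_shift[OF assms(2,3)]
    using spec[OF assms(1)[unfolded pair_in_Int_def], of "\<lambda>a b. c (a+d) (b+d)"] by simp
qed

lemma pin_down:
  assumes "pair_in_Int f S I (i+d) (j+d)" "1 \<le> i" "i \<le> j"
  shows "pair_in_Int f S I i j"
  unfolding pair_in_Int_def
proof (intro allI impI)
  fix c :: "nat \<Rightarrow> nat \<Rightarrow> _" assume "\<forall>a b. c a b \<in> S"
  then have "\<forall>a b. c (a-d) (b-d) \<in> S" by auto
  then have "pair_eval f (\<lambda>a b. c (a-d) (b-d)) (i+d) (j+d) \<in> I"
    using spec[OF assms(1)[unfolded pair_in_Int_def], of "\<lambda>a b. c (a-d) (b-d)"] by simp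
  then show "pair_eval f c i j \<in> I" unfolding pair_eval_shift[OF assms(2,3)] by simp
qed

lemma pin_shift:
  assumes "pair_in_Int f S I i (i+k)" "1 \<le> i" "1 \<le> i'"
  shows "pair_in_Int f S I i' (i'+k)"
proof (cases "i \<le> i'")
  case True
  then have "pair_in_Int f S I (i + (i'-i)) (i + k + (i'-i))" using pin_up[OF assms(1,2), of "i'-i"] by simp
  moreover have "i + (i'-i) = i'" "i + k + (i'-i) = i' + k" using True by auto
  ultimately show ?thesis by (simp add: add.commute)
next
  case False
  have "i' + (i-i') = i" "i' + k + (i-i') = i + k" using False by auto
  then have "pair_in_Int f S I (i' + (i-i')) (i' + k + (i-i'))" using assms(1) by (simp only:)
  then show ?thesis using pin_down[of f S I i' "i-i'" "i'+k"] assms(3) by simp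
qed

theorem proposition2p10:
  fixes S I :: "'a::comm_ring_1 set" and n :: nat and f :: "'a poly"
  assumes "is_subring S" and "is_ideal_of I S" and "n \<ge> 1"
  shows "(f \<in> Int_T n S I \<longleftrightarrow> (\<forall>i j. 1 \<le> i \<and> i \<le> j \<and> j \<le> n \<longrightarrow> pair_in_Int f S I i j))
       \<and> ((\<forall>i j. 1 \<le> i \<and> i \<le> j \<and> j \<le> n \<longrightarrow> pair_in_Int f S I i j) \<longleftrightarrow>
          (\<forall>k \<le> n - 1. \<exists>i \<ge> 1. pair_in_Int f S I i (i + k)))"
proof (intro conjI iffI allI impI)
  have S0: "0 \<in> S" using assms(1) unfolding is_subring_def by auto
  have I0: "0 \<in> I" using assms(2) unfolding is_ideal_of_def by auto
  {
    assume f: "f \<in> Int_T n S I"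
    fix i j assume ij: "1 \<le> i \<and> i \<le> j \<and> j \<le> n"
    show "pair_in_Int f S I i j" unfolding pair_in_Int_def
    proof (intro allI impI)
      fix c :: "nat \<Rightarrow> nat \<Rightarrow> 'a" assume c: "\<forall>a b. c a b \<in> S"
      define C where "C = (\<lambda>a b. if 1 \<le> a \<and> a \<le> b \<and> b \<le> n then c a b else 0)"
      have CT: "C \<in> tri_mats n S" unfolding tri_mats_def C_def using c by auto
      then have "poly_mat_eval n f C \<in> tri_mats n I" using f unfolding Int_T_def by blast
      then have "poly_mat_eval n f C i j \<in> I" using ij unfolding tri_mats_def by blast
      moreover have "poly_mat_eval n f C i j = pair_eval f C i j" using pme_pair[OF CT] ij by blast
      moreover have "pair_eval f C i j = pair_eval f c i j"
        by (rule pair_eval_cong) (use ij in \<open>auto simp: C_def\<close>)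
      ultimately show "pair_eval f c i j \<in> I" by simp
    qed
  }
  {
    assume P: "\<forall>i j. 1 \<le> i \<and> i \<le> j \<and> j \<le> n \<longrightarrow> pair_in_Int f S I i j"
    show "f \<in> Int_T n S I" unfolding Int_T_def
    proof (intro CollectI ballI)
      fix C assume CT: "C \<in> tri_mats n S"
      have CS: "\<forall>a b. C a b \<in> S"
      proof (intro allI)
        fix a b
        have "(1 \<le> a \<and> a \<le> b \<and> b \<le> n \<longrightarrow> C a b \<in> S) \<and> (\<not> (1 \<le> a \<and> a \<le> b \<and> b \<le> n) \<longrightarrow> C a b = 0)"
          using CT unfolding tri_mats_def by blast
        then show "C a b \<in> S" using S0 by (cases "1 \<le> a \<and> a \<le> b \<and> b \<le> n") auto
      qed
      show "poly_mat_eval n f C \<in> tri_mats n I" unfolding tri_mats_def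
      proof (intro CollectI allI conjI impI)
        fix i j assume ij: "1 \<le> i \<and> i \<le> j \<and> j \<le> n"
        then have "pair_in_Int f S I i j" using P by blast
        then have "pair_eval f C i j \<in> I" using CS unfolding pair_in_Int_def by simp
        then show "poly_mat_eval n f C i j \<in> I" using pme_pair[OF CT] ij by simp
      next
        fix i j assume ij: "\<not> (1 \<le> i \<and> i \<le> j \<and> j \<le> n)"
        show "poly_mat_eval n f C i j = 0" unfolding poly_mat_eval_def
          using mat_pow_zero[OF CT ij] by simp
      qed
    qed
  }
  {
    assume P: "\<forall>i j. 1 \<le> i \<and> i \<le> j \<and> j \<le> n \<longrightarrow> pair_in_Int f S I i j"
    fix k :: nat assume "k \<le> n - 1"
    then have "pair_in_Int f S I 1 (1 + k)" using P assms(3) by auto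
    then show "\<exists>i \<ge> 1. pair_in_Int f S I i (i + k)" by blast
  }
  {
    assume P: "\<forall>k \<le> n - 1. \<exists>i \<ge> 1. pair_in_Int f S I i (i + k)"
    fix i j assume ij: "1 \<le> i \<and> i \<le> j \<and> j \<le> n"
    then have "j - i \<le> n - 1" by auto
    then obtain i0 where "i0 \<ge> 1" "pair_in_Int f S I i0 (i0 + (j - i))" using P by blast
    then have "pair_in_Int f S I i (i + (j - i))" using pin_shift ij by blast
    then show "pair_in_Int f S I i j" using ij by simp
  }
qed

end
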